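(* Let $n\ge2$ be even. For odd $k\ge1$, define $f_k[x_ix_j]=(x_i-x_j)^k$ in $\mathbb Q[x_1,\ldots,x_n]$. Then $$f_{n-1}[x_1\ldots x_n]=(-1)^{\binom{n/2}{2}}\Big(\prod_{k=0}^{n/2-1}\binom{n-1}{k}\Big)\prod_{1\le i<j\le n}(x_i-x_j).$$ Moreover, $f_{2m-1}[x_1\ldots x_n]=0$ whenever $m\ge1$ and $2m<n$.
   Context: For a skew-symmetric assignment $g[x_ix_j]=-g[x_jx_i]$, the Pfaffian is $$g[x_1\ldots x_n]=\sum s(x_1\ldots x_n,y_1\ldots y_n)\,g[y_1y_2]\cdots g[y_{n-1}y_n],$$ where the sum is over all partitions of $\{x_1,\ldots,x_n\}$ into pairs $\{y_1,y_2\},\ldots,\{y_{n-1},y_n\}$. The sign $s(x_1\ldots x_n,y_1\ldots y_n)$ is the sign of the permutation taking $x_1\ldots x_n$ to $y_1\ldots y_n$, and each summand is independent of how the pairing is listed. *)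

theory Defs
  imports Complex_Main "HOL-Combinatorics.Permutations"
begin

text \<open>Pairings of {1..n} (n even) listed canonically: a permutation p of {1..n}
  encodes the listing y_1 ... y_n = p 1 ... p n of the pairs
  {p 1, p 2}, {p 3, p 4}, ...; we require p(2i-1) < p(2i) within each pair and the
  first elements increasing, p(2i-1) < p(2i+1). Each partition of {1..n} into pairs
  has exactly one such canonical listing.\<close>

definition pf_perms :: "nat \<Rightarrow> (nat \<Rightarrow> nat) set" where
  "pf_perms n = {p. p permutes {1..n}
      \<and> (\<forall>i\<in>{1..n div 2}. p (2*i - 1) < p (2*i))
      \<and> (\<forall>i\<in>{1..<n div 2}. p (2*i - 1) < p (2*i + 1))}"

definition pfaffian :: "nat \<Rightarrow> (nat \<Rightarrow> nat \<Rightarrow> 'a::comm_ring_1) \<Rightarrow> 'a" where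
  "pfaffian n g = (\<Sum>p\<in>pf_perms n. of_int (sign p) * (\<Prod>i\<in>{1..n div 2}. g (p (2*i - 1)) (p (2*i))))"

end

theory Submission
  imports Defs "HOL-Library.FuncSet" "HOL-Computational_Algebra.Polynomial"
begin

definition blk :: "nat \<Rightarrow> nat" where "blk t = (t + 1) div 2"

definition bet :: "(nat \<Rightarrow> nat) \<Rightarrow> nat \<Rightarrow> nat" where
  "bet s t = (if t = 0 then 0 else if odd t then 2 * s (blk t) - 1 else 2 * s (blk t))"

definition phi :: "nat set \<Rightarrow> nat \<Rightarrow> nat" where
  "phi E t = (if t \<noteq> 0 \<and> blk t \<in> E then (if odd t then t + 1 else t - 1) else t)"

definition tau :: "(nat \<Rightarrow> nat) \<Rightarrow> nat set \<Rightarrow> nat \<Rightarrow> nat" where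
  "tau s E = bet s \<circ> phi E"

lemma blk_odd[simp]: "i \<ge> 1 \<Longrightarrow> blk (2*i - Suc 0) = i" unfolding blk_def by auto
lemma blk_even[simp]: "blk (2*i) = i" unfolding blk_def by auto
lemma t_decomp: "t \<ge> 1 \<Longrightarrow> t = 2 * blk t - (if odd t then 1 else 0)"
  unfolding blk_def by (auto elim!: oddE evenE)
lemma blk_ge1: "t \<ge> 1 \<Longrightarrow> blk t \<ge> 1" unfolding blk_def by auto
lemma blk_range: "t \<in> {1..2*k} \<longleftrightarrow> t \<ge> 1 \<and> blk t \<in> {1..k}" unfolding blk_def by auto

lemma bet_odd[simp]: "i \<ge> 1 \<Longrightarrow> bet s (2*i - Suc 0) = 2 * s i - 1"
  unfolding bet_def by auto
lemma bet_even[simp]: "i \<ge> 1 \<Longrightarrow> bet s (2*i) = 2 * s i"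
  unfolding bet_def by auto
lemma phi_odd[simp]: "i \<ge> 1 \<Longrightarrow> phi E (2*i - Suc 0) = (if i \<in> E then 2*i else 2*i - 1)"
  unfolding phi_def by auto
lemma phi_even[simp]: "i \<ge> 1 \<Longrightarrow> phi E (2*i) = (if i \<in> E then 2*i - 1 else 2*i)"
  unfolding phi_def by auto

lemma phi_invol: "phi E (phi E t) = t"
proof (cases "t \<ge> 1")
  case True
  define i where "i = blk t"
  have i1: "i \<ge> 1" using True blk_ge1 i_def by auto
  have "t = 2*i - 1 \<or> t = 2*i" using t_decomp[OF True] i_def by (auto split: if_splits)
  then show ?thesis using i1 by auto
qed (auto simp: phi_def)

lemma phi_permutes: assumes "E \<subseteq> {1..k}" shows "phi E permutes {1..2*k}"
proof (rule inj_imp_permutes)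
  show "inj_on (phi E) {1..2*k}" by (metis inj_onI phi_invol)
  show "phi E t \<in> {1..2*k}" if "t \<in> {1..2*k}" for t
  proof -
    define i where "i = blk t"
    have i1: "i \<in> {1..k}" using that blk_range i_def by auto
    have "t = 2*i - 1 \<or> t = 2*i" using t_decomp[of t] that i_def by (auto split: if_splits)
    then show ?thesis using i1 by auto
  qed
  show "phi E t = t" if "t \<notin> {1..2*k}" for t
    using that assms blk_range[of t k] unfolding phi_def by auto
qed simp

lemma bet_permutes: assumes "s permutes {1..k}" shows "bet s permutes {1..2*k}"
proof (rule inj_imp_permutes)
  have s1: "s i \<ge> 1" if "i \<ge> 1" for i
    using that assms permutes_in_image[OF assms, of i] permutes_not_in[OF assms, of i] by force
  show "inj_on (bet s) {1..2*k}"
  proof (rule inj_onI)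
    fix a b assume a: "a \<in> {1..2*k}" and b: "b \<in> {1..2*k}" and e: "bet s a = bet s b"
    have sa: "s (blk a) \<ge> 1" "s (blk b) \<ge> 1" using s1 blk_ge1 a b by auto
    have "odd a = odd b \<and> s (blk a) = s (blk b)" using e a b sa unfolding bet_def
      by (auto split: if_splits) presburger+
    then have "odd a = odd b" "blk a = blk b" using permutes_inj[OF assms] by (auto dest: injD)
    then show "a = b" using t_decomp[of a] t_decomp[of b] a b by auto
  qed
  show "bet s t \<in> {1..2*k}" if "t \<in> {1..2*k}" for t
  proof -
    have "blk t \<in> {1..k}" using that blk_range by auto
    then have "s (blk t) \<in> {1..k}" using permutes_in_image[OF assms] by auto
    then show ?thesis using that unfolding bet_def by auto
  qed
  show "bet s t = t" if "t \<notin> {1..2*k}" for t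
  proof (cases "t = 0")
    case False
    then have "blk t \<notin> {1..k}" using that False blk_range[of t k] by auto
    then have "s (blk t) = blk t" using permutes_not_in[OF assms] by auto
    then show ?thesis using t_decomp[of t] False unfolding bet_def by auto
  qed (simp add: bet_def)
qed simp

lemma tau_permutes: "s permutes {1..k} \<Longrightarrow> E \<subseteq> {1..k} \<Longrightarrow> tau s E permutes {1..2*k}"
  unfolding tau_def by (intro permutes_compose phi_permutes bet_permutes)

lemma tau_odd[simp]: "i \<ge> 1 \<Longrightarrow> tau s E (2*i - Suc 0) = (if i \<in> E then 2 * s i else 2 * s i - 1)"
  unfolding tau_def by simp
lemma tau_even[simp]: "i \<ge> 1 \<Longrightarrow> tau s E (2*i) = (if i \<in> E then 2 * s i - 1 else 2 * s i)"
  unfolding tau_def by simp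

lemma permutation_of_permutes_nat: "p permutes {1..(m::nat)} \<Longrightarrow> permutation p"
  using permutation_permutes by blast

lemma phi_insert: assumes "i \<ge> 1" "i \<notin> E"
  shows "phi (insert i E) = Transposition.transpose (2*i - 1) (2*i) \<circ> phi E"
proof
  fix t
  show "phi (insert i E) t = (Transposition.transpose (2*i - 1) (2*i) \<circ> phi E) t"
  proof (cases "t \<ge> 1")
    case True
    define j where "j = blk t"
    have j1: "j \<ge> 1" using True blk_ge1 j_def by auto
    have "t = 2*j - 1 \<or> t = 2*j" using t_decomp[OF True] j_def by (auto split: if_splits)
    then show ?thesis using j1 assms
      by (cases "j = i"; cases "j \<in> E"; elim disjE; simp add: transpose_def; presburger)
  next
    case False
    then show ?thesis using assms by (auto simp: phi_def transpose_def)
  qed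
qed

lemma sign_phi: assumes "E \<subseteq> {1..k}" shows "sign (phi E) = (-1) ^ card E"
proof -
  have "finite E" using assms finite_subset by blast
  then show ?thesis using assms
  proof (induction E rule: finite_induct)
    case empty
    have "phi {} = id" by (auto simp: phi_def)
    then show ?case by simp
  next
    case (insert i E)
    have i1: "i \<ge> 1" using insert by auto
    have pE: "permutation (phi E)"
      using phi_permutes[of E k] insert permutation_of_permutes_nat by auto
    have "sign (phi (insert i E)) = sign (Transposition.transpose (2*i - 1) (2*i)) * sign (phi E)"
      unfolding phi_insert[OF i1 insert(2)]
      by (rule sign_compose[OF permutation_swap_id pE])
    also have "\<dots> = - ((-1) ^ card E)" using insert i1 by (simp add: sign_swap_id)
    finally show ?case using insert by simp
  qed
qed

lemma bet_id: "bet id = id"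
proof
  fix t show "bet id t = id t"
    using t_decomp[of t] by (auto simp: bet_def)
qed

lemma bet_swap:
  assumes "a \<ge> 1" "b \<ge> 1" "\<And>i. i \<ge> 1 \<Longrightarrow> p i \<ge> 1"
  shows "bet (Transposition.transpose a b \<circ> p) =
     Transposition.transpose (2*a - 1) (2*b - 1) \<circ> (Transposition.transpose (2*a) (2*b) \<circ> bet p)"
proof
  fix t
  show "bet (Transposition.transpose a b \<circ> p) t =
     (Transposition.transpose (2*a - 1) (2*b - 1) \<circ> (Transposition.transpose (2*a) (2*b) \<circ> bet p)) t"
  proof (cases "t = 0")
    case True then show ?thesis using assms by (simp add: bet_def transpose_def)
  next
    case False
    define i where "i = blk t"
    define j where "j = p i"
    have i1: "i \<ge> 1" using False blk_ge1 i_def by auto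
    have j1: "j \<ge> 1" using assms(3) i1 j_def by auto
    have tt: "t = 2*i - 1 \<or> t = 2*i" using t_decomp[of t] False i_def by (auto split: if_splits)
    have A: "Transposition.transpose (2*a - 1) (2*b - 1) (Transposition.transpose (2*a) (2*b) (2*j - 1))
       = 2 * Transposition.transpose a b j - 1"
      using j1 assms(1,2) by (cases "j = a"; cases "j = b"; simp add: transpose_def; arith)
    have B: "Transposition.transpose (2*a - 1) (2*b - 1) (Transposition.transpose (2*a) (2*b) (2*j))
       = 2 * Transposition.transpose a b j"
      using j1 assms(1,2) by (cases "j = a"; cases "j = b"; simp add: transpose_def; arith)
    from tt show ?thesis
    proof
      assume "t = 2*i - 1" then show ?thesis using A i1 j_def by simp
    next
      assume "t = 2*i" then show ?thesis using B i1 j_def by simp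
    qed
  qed
qed
lemma sign_bet: assumes "s permutes {1..k}" shows "sign (bet s) = 1"
  using assms finite_atLeastAtMost assms
proof (induction s rule: permutes_induct)
  case id
  have "bet (\<lambda>a. a) = (\<lambda>a. a)" using bet_id by (simp add: id_def)
  then show ?case by simp
next
  case (swap a b p)
  note pp = \<open>p permutes {1..k}\<close>
  have p1: "p i \<ge> 1" if "i \<ge> 1" for i
    using that permutes_in_image[OF pp, of i] permutes_not_in[OF pp, of i] by force
  have pb: "permutation (bet p)" using bet_permutes[OF pp] permutation_of_permutes_nat by blast
  have a1: "a \<ge> 1" "b \<ge> 1" using swap by auto
  have eq: "bet (Transposition.transpose a b \<circ> p) =
     Transposition.transpose (2*a - 1) (2*b - 1) \<circ> (Transposition.transpose (2*a) (2*b) \<circ> bet p)"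
    by (rule bet_swap) (use a1 p1 in auto)
  have "sign (bet (Transposition.transpose a b \<circ> p)) =
     sign (Transposition.transpose (2*a - 1) (2*b - 1)) * (sign (Transposition.transpose (2*a) (2*b)) * sign (bet p))"
    apply (subst eq)
    apply (subst sign_compose)
      apply (rule permutation_swap_id)
     apply (rule permutation_compose[OF permutation_swap_id pb])
    apply (subst sign_compose[OF permutation_swap_id pb])
    apply (rule refl)
    done
  also have "\<dots> = 1" using swap a1 by (simp add: sign_swap_id)
  finally show ?case .
qed

lemma sign_tau: assumes "s permutes {1..k}" "E \<subseteq> {1..k}" shows "sign (tau s E) = (-1) ^ card E"
proof -
  have 1: "permutation (bet s)" using permutation_of_permutes_nat[OF bet_permutes[OF assms(1)]] .
  have 2: "permutation (phi E)" using permutation_of_permutes_nat[OF phi_permutes[OF assms(2)]] .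
  show ?thesis unfolding tau_def sign_compose[OF 1 2] sign_bet[OF assms(1)] sign_phi[OF assms(2)] by simp
qed

definition Fs :: "nat \<Rightarrow> (nat \<Rightarrow> nat \<Rightarrow> rat) \<Rightarrow> rat" where
  "Fs k g = (\<Sum>q\<in>{q. q permutes {1..2*k}}. of_int (sign q) * (\<Prod>i\<in>{1..k}. g (q (2*i - 1)) (q (2*i))))"

definition Hs :: "nat \<Rightarrow> ((nat \<Rightarrow> nat) \<times> nat set) set" where
  "Hs k = {s. s permutes {1..k}} \<times> Pow {1..k}"

lemma prod_sign_E: assumes "E \<subseteq> {1..(k::nat)}"
  shows "(\<Prod>i\<in>{1..k}. (if i \<in> E then -1 else 1 :: rat)) = (-1) ^ card E"
proof -
  have "(\<Prod>i\<in>{1..k}. (if i \<in> E then -1 else 1 :: rat)) = (\<Prod>i\<in>E. -1)"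
    using assms by (intro prod.mono_neutral_cong_right) auto
  then show ?thesis by simp
qed

lemma term_tau:
  fixes g :: "nat \<Rightarrow> nat \<Rightarrow> rat"
  assumes skew: "\<And>a b. g a b = - g b a"
    and p: "p permutes {1..2*k}" and s: "s permutes {1..k}" and E: "E \<subseteq> {1..k}"
  shows "of_int (sign (p \<circ> tau s E)) * (\<Prod>i\<in>{1..k}. g ((p \<circ> tau s E) (2*i - 1)) ((p \<circ> tau s E) (2*i)))
       = of_int (sign p) * (\<Prod>i\<in>{1..k}. g (p (2*i - 1)) (p (2*i)))"
proof -
  have "(\<Prod>i\<in>{1..k}. g ((p \<circ> tau s E) (2*i - 1)) ((p \<circ> tau s E) (2*i)))
      = (\<Prod>i\<in>{1..k}. (if i \<in> E then -1 else 1) * g (p (2 * s i - 1)) (p (2 * s i)))"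
    by (intro prod.cong refl) (auto simp: skew[of "p (2 * s _)"])
  also have "\<dots> = (\<Prod>i\<in>{1..k}. (if i \<in> E then -1 else 1)) * (\<Prod>i\<in>{1..k}. g (p (2 * s i - 1)) (p (2 * s i)))"
    by (rule prod.distrib)
  also have "(\<Prod>i\<in>{1..k}. g (p (2 * s i - 1)) (p (2 * s i))) = (\<Prod>i\<in>{1..k}. g (p (2 * i - 1)) (p (2 * i)))"
    using prod.permute[OF s, of "\<lambda>i. g (p (2 * i - 1)) (p (2 * i))"] by (simp add: comp_def)
  finally have pr: "(\<Prod>i\<in>{1..k}. g ((p \<circ> tau s E) (2*i - 1)) ((p \<circ> tau s E) (2*i)))
     = (-1) ^ card E * (\<Prod>i\<in>{1..k}. g (p (2 * i - 1)) (p (2 * i)))"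
    using prod_sign_E[OF E] by simp
  have sg: "sign (p \<circ> tau s E) = sign p * (-1) ^ card E"
    using sign_compose[OF permutation_of_permutes_nat[OF p] permutation_of_permutes_nat[OF tau_permutes[OF s E]]]
      sign_tau[OF s E] by simp
  have "(-1::rat) ^ card E * (-1) ^ card E = 1"
    by (simp add: power_mult_distrib[symmetric])
  then show ?thesis unfolding pr sg by (simp add: algebra_simps)
qed

definition rk :: "nat \<Rightarrow> (nat \<Rightarrow> nat) \<Rightarrow> nat \<Rightarrow> nat" where
 "rk k f i = (if i \<in> {1..k} then Suc (card {j\<in>{1..k}. f j < f i}) else i)"

lemma rk_mono: assumes "i \<in> {1..k}" "i' \<in> {1..k}" "f i < f i'" shows "rk k f i < rk k f i'"
proof -
  have "{j\<in>{1..k}. f j < f i} \<subset> {j\<in>{1..k}. f j < f i'}" using assms by auto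
  then have "card {j\<in>{1..k}. f j < f i} < card {j\<in>{1..k}. f j < f i'}"
    by (intro psubset_card_mono) auto
  then show ?thesis using assms unfolding rk_def by auto
qed

lemma rk_range: assumes "i \<in> {1..k}" shows "rk k f i \<in> {1..k}"
proof -
  have "{j\<in>{1..k}. f j < f i} \<subseteq> {1..k} - {i}" by auto
  then have "card {j\<in>{1..k}. f j < f i} \<le> card ({1..k} - {i})" by (intro card_mono) auto
  also have "\<dots> = k - 1" using assms by simp
  finally show ?thesis using assms unfolding rk_def by auto
qed

lemma rk_mono_iff: assumes "inj_on f {1..k}" "i \<in> {1..k}" "i' \<in> {1..k}"
  shows "rk k f i < rk k f i' \<longleftrightarrow> f i < f i'"
proof
  assume a: "rk k f i < rk k f i'"
  show "f i < f i'"
  proof (rule ccontr)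
    assume "\<not> f i < f i'"
    then have "f i' < f i \<or> f i' = f i" by auto
    then show False
    proof
      assume "f i' < f i" then show False using rk_mono[of i' k i f] assms a by auto
    next
      assume "f i' = f i" then have "i = i'" using assms inj_onD by metis
      then show False using a by auto
    qed
  qed
qed (rule rk_mono[OF assms(2,3)])

lemma rk_permutes: assumes "inj_on f {1..k}" shows "rk k f permutes {1..k}"
proof (rule inj_imp_permutes)
  show "inj_on (rk k f) {1..k}"
  proof (rule inj_onI)
    fix i i' assume i: "i \<in> {1..k}" "i' \<in> {1..k}" and e: "rk k f i = rk k f i'"
    show "i = i'"
    proof (rule ccontr)
      assume "i \<noteq> i'"
      then have "f i \<noteq> f i'" using assms i inj_onD by metis
      then have "f i < f i' \<or> f i' < f i" by auto
      then show False using rk_mono[of i k i' f] rk_mono[of i' k i f] i e by auto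
    qed
  qed
  show "rk k f i \<in> {1..k}" if "i \<in> {1..k}" for i using rk_range that .
  show "rk k f i = i" if "i \<notin> {1..k}" for i using that unfolding rk_def by auto
qed simp

lemma rk_strict:
  assumes h: "\<And>j j'. j \<in> {1..k} \<Longrightarrow> j' \<in> {1..k} \<Longrightarrow> j < j' \<Longrightarrow> h j < h j'"
    and s: "s permutes {1..k}"
  shows "rk k (\<lambda>i. h (s i)) = s"
proof
  fix i
  show "rk k (\<lambda>i. h (s i)) i = s i"
  proof (cases "i \<in> {1..k}")
    case False then show ?thesis using permutes_not_in[OF s] unfolding rk_def by auto
  next
    case True
    have si: "s i \<in> {1..k}" using permutes_in_image[OF s] True by auto
    have hiff: "h a < h b \<longleftrightarrow> a < b" if "a \<in> {1..k}" "b \<in> {1..k}" for a b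
    proof
      assume hab: "h a < h b"
      show "a < b"
      proof (rule ccontr)
        assume "\<not> a < b"
        then have "b < a \<or> a = b" by auto
        then show False
        proof
          assume "b < a" then have "h b < h a" using h that by blast
          then show False using hab by simp
        qed (use hab in simp)
      qed
    next
      assume "a < b" then show "h a < h b" using h that by blast
    qed
    have e1: "{j\<in>{1..k}. h (s j) < h (s i)} = {j\<in>{1..k}. s j < s i}"
    proof (rule Collect_cong)
      fix j
      show "(j \<in> {1..k} \<and> h (s j) < h (s i)) = (j \<in> {1..k} \<and> s j < s i)"
      proof (cases "j \<in> {1..k}")
        case True
        then have "s j \<in> {1..k}" using permutes_in_image[OF s] by blast
        then show ?thesis using hiff[of "s j" "s i"] si True by blast
      qed blast
    qed
    have e2: "card {j\<in>{1..k}. s j < s i} = card (s ` {j\<in>{1..k}. s j < s i})"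
      using permutes_inj_on[OF s] by (intro card_image[symmetric]) (auto intro: inj_on_subset)
    have e3: "s ` {j\<in>{1..k}. s j < s i} = {1..<s i}"
    proof
      show "s ` {j\<in>{1..k}. s j < s i} \<subseteq> {1..<s i}"
      proof (rule image_subsetI)
        fix j assume j: "j \<in> {j\<in>{1..k}. s j < s i}"
        then have "s j \<in> {1..k}" using permutes_in_image[OF s] by blast
        then show "s j \<in> {1..<s i}" using j by auto
      qed
      show "{1..<s i} \<subseteq> s ` {j\<in>{1..k}. s j < s i}"
      proof
        fix y assume y: "y \<in> {1..<s i}"
        then have "y \<in> {1..k}" using si by auto
        then obtain j where "j \<in> {1..k}" "s j = y" using permutes_image[OF s] by (metis imageE)
        then show "y \<in> s ` {j\<in>{1..k}. s j < s i}" using y by auto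
      qed
    qed
    have "card {j\<in>{1..k}. h (s j) < h (s i)} = s i - 1" unfolding e1 e2 e3 by simp
    then show ?thesis using True si unfolding rk_def by auto
  qed
qed

lemma canon_mono:
  assumes "p \<in> pf_perms (2*k)" "j \<in> {1..k}" "j' \<in> {1..k}" "j < j'"
  shows "p (2*j - 1) < p (2*j' - 1)"
proof -
  have st: "\<forall>i\<in>{1..<k}. p (2*i - 1) < p (2*i + 1)"
    using assms(1) unfolding pf_perms_def by (simp add: mult_2_right)
  have step: "p (2*a - 1) < p (2*(Suc a) - 1)" if "a \<in> {1..<k}" for a
  proof -
    have "2*(Suc a) - 1 = 2*a + 1" by simp
    then show ?thesis using st that by simp
  qed
  have "\<And>d. j + d \<le> k \<Longrightarrow> d \<ge> 1 \<Longrightarrow> p (2*j - 1) < p (2*(j+d) - 1)"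
  proof -
    fix d show "j + d \<le> k \<Longrightarrow> d \<ge> 1 \<Longrightarrow> p (2*j - 1) < p (2*(j+d) - 1)"
    proof (induction d)
      case 0 then show ?case by simp
    next
      case (Suc d)
      show ?case
      proof (cases "d = 0")
        case True then show ?thesis using step[of j] Suc assms by auto
      next
        case False
        then have "p (2*j - 1) < p (2*(j+d) - 1)" using Suc by auto
        also have "\<dots> < p (2*(Suc (j+d)) - 1)" using step[of "j+d"] Suc assms by auto
        finally show ?thesis by simp
      qed
    qed
  qed
  from this[of "j' - j"] show ?thesis using assms by auto
qed

definition mq :: "(nat \<Rightarrow> nat) \<Rightarrow> nat \<Rightarrow> nat" where
  "mq q i = min (q (2*i - 1)) (q (2*i))"
definition Eq :: "nat \<Rightarrow> (nat \<Rightarrow> nat) \<Rightarrow> nat set" where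
  "Eq k q = {i\<in>{1..k}. q (2*i) < q (2*i - 1)}"
definition psi :: "nat \<Rightarrow> (nat \<Rightarrow> nat) \<Rightarrow> (nat \<Rightarrow> nat) \<times> (nat \<Rightarrow> nat) \<times> nat set" where
  "psi k q = (q \<circ> inv (tau (rk k (mq q)) (Eq k q)), rk k (mq q), Eq k q)"

lemma rk_cong: "(\<And>i. i \<in> {1..k} \<Longrightarrow> f i = f' i) \<Longrightarrow> rk k f = rk k f'"
  unfolding rk_def by (intro ext) (auto intro!: arg_cong[where f=card])

lemma mq_inj: assumes q: "q permutes {1..2*k}" shows "inj_on (mq q) {1..k}"
proof (rule inj_onI)
  fix i i' assume i: "i \<in> {1..k}" and i': "i' \<in> {1..k}" and e: "mq q i = mq q i'"
  obtain a where a: "a = 2*i - 1 \<or> a = 2*i" "mq q i = q a" unfolding mq_def by (metis min_def)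
  obtain b where b: "b = 2*i' - 1 \<or> b = 2*i'" "mq q i' = q b" unfolding mq_def by (metis min_def)
  have "q a = q b" using a b e by simp
  then have "a = b" using permutes_inj[OF q] by (auto dest: injD)
  then have "blk a = blk b" by simp
  moreover have "blk a = i" using a(1) i by auto
  moreover have "blk b = i'" using b(1) i' by auto
  ultimately show "i = i'" by simp
qed

lemma Eq_sub: "Eq k q \<subseteq> {1..k}" unfolding Eq_def by auto

lemma psi_in:
  assumes q: "q permutes {1..2*k}"
  shows "psi k q \<in> pf_perms (2*k) \<times> Hs k"
proof -
  define r where "r = rk k (mq q)"
  define E where "E = Eq k q"
  define t where "t = tau r E"
  define p where "p = q \<circ> inv t"
  have r: "r permutes {1..k}" unfolding r_def by (rule rk_permutes[OF mq_inj[OF q]])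
  have E: "E \<subseteq> {1..k}" unfolding E_def by (rule Eq_sub)
  have t: "t permutes {1..2*k}" unfolding t_def by (rule tau_permutes[OF r E])
  have p: "p permutes {1..2*k}" unfolding p_def by (rule permutes_compose[OF permutes_inv[OF t] q])
  have pt: "p (t x) = q x" for x unfolding p_def using permutes_inverses(2)[OF t] by simp
  have qinj: "q a = q b \<Longrightarrow> a = b" for a b using permutes_inj[OF q] by (auto dest: injD)
  have key: "p (2 * r i - 1) = mq q i \<and> p (2 * r i - 1) < p (2 * r i)" if i: "i \<in> {1..k}" for i
  proof -
    have i1: "i \<ge> 1" using i by auto
    have ne: "q (2*i - 1) \<noteq> q (2*i)" using qinj[of "2*i - 1" "2*i"] i1 by auto
    show ?thesis
    proof (cases "i \<in> E")
      case True
      have "p (2 * r i) = q (2*i - 1)" using pt[of "2*i - 1"] True i1 unfolding t_def by simp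
      moreover have "p (2 * r i - 1) = q (2*i)" using pt[of "2*i"] True i1 unfolding t_def by simp
      moreover have "q (2*i) < q (2*i - 1)" using True unfolding E_def Eq_def by auto
      ultimately show ?thesis unfolding mq_def by auto
    next
      case False
      have "p (2 * r i - 1) = q (2*i - 1)" using pt[of "2*i - 1"] False i1 unfolding t_def by simp
      moreover have "p (2 * r i) = q (2*i)" using pt[of "2*i"] False i1 unfolding t_def by simp
      moreover have "\<not> q (2*i) < q (2*i - 1)" using False i unfolding E_def Eq_def by auto
      ultimately show ?thesis unfolding mq_def using ne by auto
    qed
  qed
  have rinv: "inv r j \<in> {1..k} \<and> r (inv r j) = j" if "j \<in> {1..k}" for j
    using permutes_inverses(1)[OF r] permutes_in_image[OF permutes_inv[OF r]] that by blast
  have c1: "p (2*j - 1) < p (2*j)" if "j \<in> {1..k}" for j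
    using key[of "inv r j"] rinv[OF that] by simp
  have c2: "p (2*j - 1) < p (2*j + 1)" if "j \<in> {1..<k}" for j
  proof -
    have j: "j \<in> {1..k}" "Suc j \<in> {1..k}" using that by auto
    have "inv r j \<in> {1..k}" "inv r (Suc j) \<in> {1..k}" using rinv j by auto
    moreover have "r (inv r j) < r (inv r (Suc j))" using rinv j by auto
    ultimately have "mq q (inv r j) < mq q (inv r (Suc j))"
      using rk_mono_iff[OF mq_inj[OF q]] unfolding r_def by blast
    moreover have "p (2*j - 1) = mq q (inv r j)" using key[of "inv r j"] rinv[OF j(1)] by simp
    moreover have "p (2*(Suc j) - 1) = mq q (inv r (Suc j))" using key[of "inv r (Suc j)"] rinv[OF j(2)] by simp
    moreover have "2*(Suc j) - 1 = 2*j + 1" by simp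
    ultimately show ?thesis by simp
  qed
  have "p \<in> pf_perms (2*k)" unfolding pf_perms_def using p c1 c2 by auto
  moreover have "(r, E) \<in> Hs k" unfolding Hs_def using r E by auto
  ultimately show ?thesis unfolding psi_def r_def E_def t_def p_def by simp
qed


lemma psi_Phi:
  assumes p: "p \<in> pf_perms (2*k)" and s: "s permutes {1..k}" and E: "E \<subseteq> {1..k}"
  shows "psi k (p \<circ> tau s E) = (p, s, E)"
proof -
  define q where "q = p \<circ> tau s E"
  have pp: "p permutes {1..2*k}" using p unfolding pf_perms_def by auto
  have canon: "p (2*j - 1) < p (2*j)" if "j \<in> {1..k}" for j
    using p that unfolding pf_perms_def by auto
  have si: "s i \<in> {1..k}" if "i \<in> {1..k}" for i using permutes_in_image[OF s] that by blast
  have mqi: "mq q i = p (2 * s i - 1)" if i: "i \<in> {1..k}" for i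
  proof -
    have i1: "i \<ge> 1" using i by auto
    have c: "p (2 * s i - 1) < p (2 * s i)" using canon[OF si[OF i]] .
    show ?thesis using c i1 unfolding q_def mq_def by (cases "i \<in> E") auto
  qed
  have Eqq: "Eq k q = E"
  proof -
    have "i \<in> E \<longleftrightarrow> q (2*i) < q (2*i - 1)" if i: "i \<in> {1..k}" for i
    proof -
      have i1: "i \<ge> 1" using i by auto
      have c: "p (2 * s i - 1) < p (2 * s i)" using canon[OF si[OF i]] .
      show ?thesis using c i1 unfolding q_def by (cases "i \<in> E") auto
    qed
    then show ?thesis unfolding Eq_def using E by auto
  qed
  have rkq: "rk k (mq q) = s"
  proof -
    have "rk k (mq q) = rk k (\<lambda>i. p (2 * s i - 1))" by (rule rk_cong) (rule mqi)
    also have "\<dots> = s"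
      by (rule rk_strict[where h = "\<lambda>j. p (2*j - 1)", OF _ s]) (rule canon_mono[OF p])
    finally show ?thesis .
  qed
  have t: "tau s E permutes {1..2*k}" by (rule tau_permutes[OF s E])
  have "q \<circ> inv (tau s E) = p" unfolding q_def using permutes_inv_o(1)[OF t] by (simp add: comp_assoc)
  then have "psi k q = (p, s, E)" unfolding psi_def Eqq rkq by simp
  then show ?thesis unfolding q_def .
qed

lemma Fs_rel:
  fixes g :: "nat \<Rightarrow> nat \<Rightarrow> rat"
  assumes skew: "\<And>a b. g a b = - g b a"
  shows "Fs k g = of_nat (card (Hs k)) * pfaffian (2*k) g"
proof -
  define T where "T = (\<lambda>q. of_int (sign q) * (\<Prod>i\<in>{1..k}. g (q (2*i - 1)) (q (2*i))) :: rat)"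
  define Phi where "Phi = (\<lambda>x :: (nat \<Rightarrow> nat) \<times> (nat \<Rightarrow> nat) \<times> nat set. fst x \<circ> tau (fst (snd x)) (snd (snd x)))"
  have "Fs k g = sum T {q. q permutes {1..2*k}}" unfolding Fs_def T_def by simp
  also have "\<dots> = sum (T \<circ> Phi) (pf_perms (2*k) \<times> Hs k)"
  proof (rule sum.reindex_bij_witness[where j = "psi k" and i = Phi])
    fix q assume q: "q \<in> {q. q permutes {1..2*k}}"
    then have qq: "q permutes {1..2*k}" by simp
    have t: "tau (rk k (mq q)) (Eq k q) permutes {1..2*k}"
      by (rule tau_permutes[OF rk_permutes[OF mq_inj[OF qq]] Eq_sub])
    show "Phi (psi k q) = q" unfolding Phi_def psi_def
      using permutes_inv_o(2)[OF t] by (simp add: comp_assoc)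
    then show "(T \<circ> Phi) (psi k q) = T q" by simp
    show "psi k q \<in> pf_perms (2*k) \<times> Hs k" by (rule psi_in[OF qq])
  next
    fix x assume x: "x \<in> pf_perms (2*k) \<times> Hs k"
    obtain p s E where xe: "x = (p, s, E)" by (cases x) auto
    have p: "p \<in> pf_perms (2*k)" and s: "s permutes {1..k}" and E: "E \<subseteq> {1..k}"
      using x unfolding xe Hs_def by auto
    show "psi k (Phi x) = x" unfolding xe Phi_def using psi_Phi[OF p s E] by simp
    have pp: "p permutes {1..2*k}" using p unfolding pf_perms_def by auto
    show "Phi x \<in> {q. q permutes {1..2*k}}" unfolding xe Phi_def
      using permutes_compose[OF tau_permutes[OF s E] pp] by simp
  qed
  also have "\<dots> = sum (\<lambda>x. T (fst x)) (pf_perms (2*k) \<times> Hs k)"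
  proof (rule sum.cong[OF refl])
    fix x assume x: "x \<in> pf_perms (2*k) \<times> Hs k"
    obtain p s E where xe: "x = (p, s, E)" by (cases x) auto
    have p: "p \<in> pf_perms (2*k)" and s: "s permutes {1..k}" and E: "E \<subseteq> {1..k}"
      using x unfolding xe Hs_def by auto
    have pp: "p permutes {1..2*k}" using p unfolding pf_perms_def by auto
    show "(T \<circ> Phi) x = T (fst x)" unfolding xe Phi_def T_def
      using term_tau[OF skew pp s E] by simp
  qed
  also have "\<dots> = (\<Sum>p\<in>pf_perms (2*k). \<Sum>h\<in>Hs k. T p)"
    unfolding sum.cartesian_product by (simp add: split_def)
  also have "\<dots> = of_nat (card (Hs k)) * (\<Sum>p\<in>pf_perms (2*k). T p)"
    by (simp add: sum_distrib_left)
  also have "(\<Sum>p\<in>pf_perms (2*k). T p) = pfaffian (2*k) g"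
    unfolding pfaffian_def T_def by simp
  finally show ?thesis .
qed

definition Dx :: "nat \<Rightarrow> (nat \<Rightarrow> rat) \<Rightarrow> (nat \<Rightarrow> nat) \<Rightarrow> rat" where
  "Dx n x e = (\<Sum>q\<in>{q. q permutes {1..n}}. of_int (sign q) * (\<Prod>t\<in>{1..n}. x (q t) ^ e t))"

definition ex :: "nat \<Rightarrow> (nat \<Rightarrow> nat) \<Rightarrow> nat \<Rightarrow> nat" where
  "ex N c t = (if odd t then c (blk t) else N - c (blk t))"

definition w :: "nat \<Rightarrow> nat \<Rightarrow> rat" where
  "w N c = of_nat (N choose c) * (-1) ^ (N - c)"

definition W :: "nat \<Rightarrow> nat \<Rightarrow> (nat \<Rightarrow> nat) \<Rightarrow> rat" where
  "W k N c = (\<Prod>i\<in>{1..k}. w N (c i))"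

lemma prod_pairs: "(\<Prod>i\<in>{1..(k::nat)}. f (2*i - 1) * f (2*i)) = (\<Prod>t\<in>{1..2*k}. (f t :: 'a::comm_monoid_mult))"
proof (induction k)
  case 0 then show ?case by simp
next
  case (Suc k)
  have e: "{1..2 * Suc k} = insert (Suc (Suc (2*k))) (insert (Suc (2*k)) {1..2*k})" by auto
  have "(\<Prod>i\<in>{1..Suc k}. f (2*i - 1) * f (2*i)) = (\<Prod>i\<in>{1..k}. f (2*i - 1) * f (2*i)) * (f (2 * Suc k - 1) * f (2 * Suc k))"
    by (simp add: prod.cl_ivl_Suc)
  also have "\<dots> = (\<Prod>t\<in>{1..2*k}. f t) * (f (Suc (2*k)) * f (Suc (Suc (2*k))))" using Suc by simp
  also have "\<dots> = (\<Prod>t\<in>{1..2 * Suc k}. f t)" unfolding e by (simp add: mult_ac)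
  finally show ?case .
qed

lemma binom_expand: "((a::rat) - b) ^ N = (\<Sum>c\<le>N. w N c * (a ^ c * b ^ (N - c)))"
proof -
  have "(a - b) ^ N = (a + (- b)) ^ N" by simp
  also have "\<dots> = (\<Sum>c\<le>N. of_nat (N choose c) * a ^ c * (- b) ^ (N - c))" by (rule binomial_ring)
  also have "\<dots> = (\<Sum>c\<le>N. w N c * (a ^ c * b ^ (N - c)))"
    unfolding w_def by (intro sum.cong refl) (simp add: power_minus[of b])
  finally show ?thesis .
qed

lemma Fs_expand:
  "Fs k (\<lambda>a b. (x a - x b) ^ N) = (\<Sum>c\<in>PiE {1..k} (\<lambda>_. {..N}). W k N c * Dx (2*k) x (ex N c))"
proof -
  let ?P = "{q. q permutes {1..2*k}}"
  let ?C = "PiE {1..k} (\<lambda>_. {..N})"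
  define h where "h = (\<lambda>(q::nat\<Rightarrow>nat) (i::nat) (c::nat). w N c * (x (q (2*i - 1)) ^ c * x (q (2*i)) ^ (N - c)))"
  define G where "G = (\<lambda>(q::nat\<Rightarrow>nat) (c::nat\<Rightarrow>nat). of_int (sign q) * (\<Prod>t\<in>{1..2*k}. x (q t) ^ ex N c t) :: rat)"
  have s1: "Fs k (\<lambda>a b. (x a - x b) ^ N) = (\<Sum>q\<in>?P. of_int (sign q) * (\<Prod>i\<in>{1..k}. \<Sum>c\<le>N. h q i c))"
    unfolding Fs_def h_def by (simp only: binom_expand)
  have s2: "(\<Prod>i\<in>{1..k}. \<Sum>c\<le>N. h q i c) = (\<Sum>c\<in>?C. \<Prod>i\<in>{1..k}. h q i (c i))" for q
    by (rule prod_sum_PiE) auto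
  have s3: "(\<Prod>i\<in>{1..k}. h q i (c i)) = W k N c * (\<Prod>t\<in>{1..2*k}. x (q t) ^ ex N c t)" for q c
  proof -
    have "(\<Prod>i\<in>{1..k}. h q i (c i))
        = W k N c * (\<Prod>i\<in>{1..k}. x (q (2*i - 1)) ^ c i * x (q (2*i)) ^ (N - c i))"
      unfolding W_def h_def by (rule prod.distrib)
    also have "(\<Prod>i\<in>{1..k}. x (q (2*i - 1)) ^ c i * x (q (2*i)) ^ (N - c i))
        = (\<Prod>i\<in>{1..k}. x (q (2*i - 1)) ^ ex N c (2*i - 1) * x (q (2*i)) ^ ex N c (2*i))"
      by (intro prod.cong refl) (auto simp: ex_def)
    also have "\<dots> = (\<Prod>t\<in>{1..2*k}. x (q t) ^ ex N c t)" by (rule prod_pairs)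
    finally show ?thesis .
  qed
  have "Fs k (\<lambda>a b. (x a - x b) ^ N) = (\<Sum>q\<in>?P. \<Sum>c\<in>?C. W k N c * G q c)"
    unfolding s1 s2 s3 G_def by (simp add: sum_distrib_left mult_ac)
  also have "\<dots> = (\<Sum>c\<in>?C. \<Sum>q\<in>?P. W k N c * G q c)" by (rule sum.swap)
  also have "\<dots> = (\<Sum>c\<in>?C. W k N c * Dx (2*k) x (ex N c))"
    unfolding Dx_def G_def by (simp add: sum_distrib_left)
  finally show ?thesis .
qed


lemma Dx_alt_exp:
  assumes st: "s \<in> {1..n}" "t \<in> {1..n}" "s \<noteq> t" and e: "e s = e t"
  shows "Dx n x e = 0"
proof -
  let ?T = "Transposition.transpose s t"
  let ?P = "{q. q permutes {1..n}}"
  have T: "?T permutes {1..n}" using st by (intro permutes_swap_id) auto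
  have eT: "e (?T u) = e u" for u using e by (auto simp: transpose_def)
  have "Dx n x e = (\<Sum>q\<in>?P. of_int (sign (q \<circ> ?T)) * (\<Prod>u\<in>{1..n}. x ((q \<circ> ?T) u) ^ e u))"
    unfolding Dx_def by (rule sum_permutations_compose_right[OF T])
  also have "\<dots> = (\<Sum>q\<in>?P. - (of_int (sign q) * (\<Prod>u\<in>{1..n}. x (q u) ^ e u)))"
  proof (rule sum.cong[OF refl])
    fix q assume "q \<in> ?P"
    then have q: "q permutes {1..n}" by simp
    have sg: "sign (q \<circ> ?T) = - sign q"
      using sign_compose[OF permutation_of_permutes_nat[OF q] permutation_swap_id] st
      by (simp add: sign_swap_id)
    have "(\<Prod>u\<in>{1..n}. x ((q \<circ> ?T) u) ^ e u) = (\<Prod>u\<in>{1..n}. x (q (?T u)) ^ e (?T u))"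
      by (simp add: eT)
    also have "\<dots> = (\<Prod>u\<in>{1..n}. x (q u) ^ e u)"
      using prod.permute[OF T, of "\<lambda>u. x (q u) ^ e u"] by (simp add: comp_def)
    finally show "of_int (sign (q \<circ> ?T)) * (\<Prod>u\<in>{1..n}. x ((q \<circ> ?T) u) ^ e u)
        = - (of_int (sign q) * (\<Prod>u\<in>{1..n}. x (q u) ^ e u))" using sg by simp
  qed
  also have "\<dots> = - Dx n x e" unfolding Dx_def by (simp add: sum_negf)
  finally show ?thesis by simp
qed

lemma Dx_alt_var:
  assumes ab: "a \<in> {1..n}" "b \<in> {1..n}" "a \<noteq> b" and xe: "x a = x b"
  shows "Dx n x e = 0"
proof -
  let ?T = "Transposition.transpose a b"
  let ?P = "{q. q permutes {1..n}}"
  have T: "?T permutes {1..n}" using ab by (intro permutes_swap_id) auto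
  have xT: "x (?T u) = x u" for u using xe by (auto simp: transpose_def)
  have "Dx n x e = (\<Sum>q\<in>?P. of_int (sign (?T \<circ> q)) * (\<Prod>u\<in>{1..n}. x ((?T \<circ> q) u) ^ e u))"
    unfolding Dx_def by (rule setum_permutations_compose_left[OF T])
  also have "\<dots> = (\<Sum>q\<in>?P. - (of_int (sign q) * (\<Prod>u\<in>{1..n}. x (q u) ^ e u)))"
  proof (rule sum.cong[OF refl])
    fix q assume "q \<in> ?P"
    then have q: "q permutes {1..n}" by simp
    have sg: "sign (?T \<circ> q) = - sign q"
      using sign_compose[OF permutation_swap_id permutation_of_permutes_nat[OF q]] ab
      by (simp add: sign_swap_id)
    show "of_int (sign (?T \<circ> q)) * (\<Prod>u\<in>{1..n}. x ((?T \<circ> q) u) ^ e u)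
        = - (of_int (sign q) * (\<Prod>u\<in>{1..n}. x (q u) ^ e u))" using sg by (simp add: xT)
  qed
  also have "\<dots> = - Dx n x e" unfolding Dx_def by (simp add: sum_negf)
  finally show ?thesis by simp
qed

lemma Dx_perm_exp:
  assumes r: "r permutes {1..n}" and e: "\<And>t. t \<in> {1..n} \<Longrightarrow> e t = r t - 1"
  shows "Dx n x e = of_int (sign r) * Dx n x (\<lambda>t. t - 1)"
proof -
  let ?P = "{q. q permutes {1..n}}"
  have "Dx n x e = (\<Sum>q\<in>?P. of_int (sign (q \<circ> r)) * (\<Prod>u\<in>{1..n}. x ((q \<circ> r) u) ^ e u))"
    unfolding Dx_def by (rule sum_permutations_compose_right[OF r])
  also have "\<dots> = (\<Sum>q\<in>?P. of_int (sign r) * (of_int (sign q) * (\<Prod>u\<in>{1..n}. x (q u) ^ (u - 1))))"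
  proof (rule sum.cong[OF refl])
    fix q assume "q \<in> ?P"
    then have q: "q permutes {1..n}" by simp
    have sg: "sign (q \<circ> r) = sign q * sign r"
      using sign_compose[OF permutation_of_permutes_nat[OF q] permutation_of_permutes_nat[OF r]] .
    have "(\<Prod>u\<in>{1..n}. x ((q \<circ> r) u) ^ e u) = (\<Prod>u\<in>{1..n}. x (q (r u)) ^ (r u - 1))"
      by (intro prod.cong refl) (simp add: e)
    also have "\<dots> = (\<Prod>u\<in>{1..n}. x (q u) ^ (u - 1))"
      using prod.permute[OF r, of "\<lambda>u. x (q u) ^ (u - 1)"] by (simp add: comp_def)
    finally show "of_int (sign (q \<circ> r)) * (\<Prod>u\<in>{1..n}. x ((q \<circ> r) u) ^ e u)
        = of_int (sign r) * (of_int (sign q) * (\<Prod>u\<in>{1..n}. x (q u) ^ (u - 1)))" using sg by simp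
  qed
  also have "\<dots> = of_int (sign r) * Dx n x (\<lambda>t. t - 1)" unfolding Dx_def by (simp add: sum_distrib_left)
  finally show ?thesis .
qed

lemma perms_fix_last:
  "{q. q permutes {1..Suc n} \<and> q (Suc n) = Suc n} = {q. q permutes {1..(n::nat)}}"
proof (intro set_eqI iffI)
  fix q assume "q \<in> {q. q permutes {1..Suc n} \<and> q (Suc n) = Suc n}"
  then have q: "q permutes insert (Suc n) {1..n}" "q (Suc n) = Suc n"
    by (auto simp: atLeastAtMostSuc_conv)
  show "q \<in> {q. q permutes {1..n}}" using permutes_insert_lemma[OF q(1)] q(2) by simp
next
  fix q assume "q \<in> {q. q permutes {1..n}}"
  then have q: "q permutes {1..n}" by simp
  have "q permutes {1..Suc n}" by (rule permutes_subset[OF q]) auto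
  moreover have "q (Suc n) = Suc n" using permutes_not_in[OF q] by simp
  ultimately show "q \<in> {q. q permutes {1..Suc n} \<and> q (Suc n) = Suc n}" by simp
qed

lemma vandermonde: "Dx n x (\<lambda>t. t - 1) = (\<Prod>a\<in>{1..n}. \<Prod>b\<in>{a<..n}. (x b - x a))"
proof (induction n)
  case 0
  have "{q. q permutes ({}::nat set)} = {id}" by auto
  then show ?case unfolding Dx_def by simp
next
  case (Suc n)
  let ?m = "Suc n"
  let ?std = "\<lambda>t::nat. t - 1"
  define p where "p = (\<Prod>a\<in>{1..n}. [:- x a, 1:])"
  define ej where "ej = (\<lambda>j t. if t = ?m then j else t - (1::nat))"
  define B where "B = (\<lambda>q. of_int (sign q) * (\<Prod>t\<in>{1..n}. x (q t) ^ (t - 1)) :: rat)"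
  have polyp: "poly p z = (\<Prod>a\<in>{1..n}. z - x a)" for z unfolding p_def by (simp add: poly_prod)
  have degp: "degree p = n" unfolding p_def by (subst degree_prod_eq_sum_degree) auto
  have coefp: "coeff p n = 1"
  proof -
    have "coeff p n = lead_coeff p" using degp by simp
    also have "\<dots> = 1" unfolding p_def lead_coeff_prod by simp
    finally show ?thesis .
  qed
  have split: "(\<Prod>t\<in>{1..?m}. f t) = (\<Prod>t\<in>{1..n}. f t) * f ?m" for f :: "nat \<Rightarrow> rat"
    by (simp add: prod.cl_ivl_Suc)
  have ejn: "ej n = ?std" unfolding ej_def by auto
  have ej0: "Dx ?m x (ej j) = 0" if "j < n" for j
    by (rule Dx_alt_exp[of "Suc j" ?m ?m]) (use that in \<open>auto simp: ej_def\<close>)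
  have Dxej: "Dx ?m x (ej j) = (\<Sum>q\<in>{q. q permutes {1..?m}}. B q * x (q ?m) ^ j)" for j
    unfolding Dx_def B_def
    by (intro sum.cong refl) (simp add: split ej_def mult_ac)
  have "Dx ?m x ?std = (\<Sum>j\<le>n. coeff p j * Dx ?m x (ej j))"
  proof -
    have "(\<Sum>j\<le>n. coeff p j * Dx ?m x (ej j)) = (\<Sum>j\<in>{n}. coeff p j * Dx ?m x (ej j))"
      by (rule sum.mono_neutral_right) (auto simp: ej0)
    then have "(\<Sum>j\<le>n. coeff p j * Dx ?m x (ej j)) = coeff p n * Dx ?m x (ej n)" by simp
    then show ?thesis using coefp ejn by simp
  qed
  also have "\<dots> = (\<Sum>q\<in>{q. q permutes {1..?m}}. B q * poly p (x (q ?m)))"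
  proof -
    have "(\<Sum>j\<le>n. coeff p j * Dx ?m x (ej j))
        = (\<Sum>j\<le>n. \<Sum>q\<in>{q. q permutes {1..?m}}. B q * (coeff p j * x (q ?m) ^ j))"
      unfolding Dxej by (simp add: sum_distrib_left mult_ac)
    also have "\<dots> = (\<Sum>q\<in>{q. q permutes {1..?m}}. \<Sum>j\<le>n. B q * (coeff p j * x (q ?m) ^ j))"
      by (rule sum.swap)
    also have "\<dots> = (\<Sum>q\<in>{q. q permutes {1..?m}}. B q * poly p (x (q ?m)))"
      unfolding poly_altdef degp by (simp add: sum_distrib_left)
    finally show ?thesis .
  qed
  also have "\<dots> = (\<Sum>q\<in>{q. q permutes {1..n}}. B q * poly p (x ?m))"
  proof (rule sum.mono_neutral_cong_right)
    show "finite {q. q permutes {1..?m}}" by (rule finite_permutations) simp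
    show "{q. q permutes {1..n}} \<subseteq> {q. q permutes {1..?m}}"
      using perms_fix_last[of n] by blast
    show "\<forall>q\<in>{q. q permutes {1..?m}} - {q. q permutes {1..n}}. B q * poly p (x (q ?m)) = 0"
    proof
      fix q assume that: "q \<in> {q. q permutes {1..?m}} - {q. q permutes {1..n}}"
      have q: "q permutes {1..?m}" "q ?m \<noteq> ?m" using that perms_fix_last[of n] by auto
      have "q ?m \<in> {1..?m}" using permutes_in_image[OF q(1)] by simp
      then have "q ?m \<in> {1..n}" using q(2) by auto
      then have "poly p (x (q ?m)) = 0" unfolding polyp by (intro prod_zero) auto
      then show "B q * poly p (x (q ?m)) = 0" by simp
    qed
    show "B q * poly p (x (q ?m)) = B q * poly p (x ?m)" if "q \<in> {q. q permutes {1..n}}" for q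
      using that permutes_not_in[of q "{1..n}" ?m] by simp
  qed
  also have "\<dots> = poly p (x ?m) * Dx n x ?std"
    unfolding Dx_def B_def by (simp add: sum_distrib_left mult_ac)
  also have "\<dots> = (\<Prod>a\<in>{1..n}. x ?m - x a) * (\<Prod>a\<in>{1..n}. \<Prod>b\<in>{a<..n}. (x b - x a))"
    unfolding polyp Suc.IH ..
  also have "\<dots> = (\<Prod>a\<in>{1..?m}. \<Prod>b\<in>{a<..?m}. (x b - x a))"
  proof -
    have "(\<Prod>a\<in>{1..?m}. \<Prod>b\<in>{a<..?m}. (x b - x a)) = (\<Prod>a\<in>{1..n}. \<Prod>b\<in>{a<..?m}. (x b - x a))"
      by (simp add: prod.cl_ivl_Suc)
    also have "\<dots> = (\<Prod>a\<in>{1..n}. (\<Prod>b\<in>{a<..n}. (x b - x a)) * (x ?m - x a))"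
    proof (rule prod.cong[OF refl])
      fix a assume "a \<in> {1..n}"
      then have "{a<..?m} = insert ?m {a<..n}" by auto
      then show "(\<Prod>b\<in>{a<..?m}. (x b - x a)) = (\<Prod>b\<in>{a<..n}. (x b - x a)) * (x ?m - x a)"
        by (simp add: mult.commute)
    qed
    also have "\<dots> = (\<Prod>a\<in>{1..n}. x ?m - x a) * (\<Prod>a\<in>{1..n}. \<Prod>b\<in>{a<..n}. (x b - x a))"
      by (simp add: prod.distrib mult.commute)
    finally show ?thesis by simp
  qed
  finally show ?case .
qed

definition cyc :: "nat \<Rightarrow> nat \<Rightarrow> nat" where
  "cyc m u = (if u \<in> {1..m} then u + 1 else if u = Suc m then 1 else u)"

lemma cyc_0: "cyc 0 = id" unfolding cyc_def by (auto simp: id_def)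

lemma cyc_Suc: "cyc (Suc m) = Transposition.transpose 1 (m + 2) \<circ> cyc m"
proof
  fix u
  show "cyc (Suc m) u = (Transposition.transpose 1 (m + 2) \<circ> cyc m) u"
    unfolding cyc_def by (auto simp: transpose_def)
qed

lemma cyc_perm: "cyc m permutes {1..Suc m} \<and> sign (cyc m) = (-1) ^ m"
proof (induction m)
  case 0 then show ?case by (metis cyc_0 permutes_id sign_id power_0)
next
  case (Suc m)
  have T: "Transposition.transpose 1 (m + 2) permutes {1..Suc (Suc m)}" by (intro permutes_swap_id) auto
  have C: "cyc m permutes {1..Suc (Suc m)}" using Suc.IH by (auto intro: permutes_subset)
  have "cyc (Suc m) permutes {1..Suc (Suc m)}" unfolding cyc_Suc by (rule permutes_compose[OF C T])
  moreover have "sign (cyc (Suc m)) = (-1) ^ Suc m"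
    unfolding cyc_Suc
    using sign_compose[OF permutation_swap_id permutation_of_permutes_nat[OF C]] Suc.IH
    by (simp add: sign_swap_id)
  ultimately show ?case by simp
qed

definition rho0 :: "nat \<Rightarrow> nat \<Rightarrow> nat" where
  "rho0 k t = (if t \<in> {1..2*k} then (if odd t then k + 1 - blk t else k + blk t) else t)"

lemma rho0_in: assumes "t \<in> {1..2*k}" shows "rho0 k t \<in> {1..2*k}"
proof -
  have "blk t \<in> {1..k}" using assms blk_range by auto
  then show ?thesis using assms unfolding rho0_def by auto
qed

lemma rho0_Suc: "rho0 (Suc k) = cyc (2*k) \<circ> rho0 k"
proof
  fix t
  show "rho0 (Suc k) t = (cyc (2*k) \<circ> rho0 k) t"
  proof (cases "t \<in> {1..2*k}")
    case True
    have b: "blk t \<in> {1..k}" using True blk_range by auto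
    have r: "rho0 k t \<in> {1..2*k}" by (rule rho0_in[OF True])
    have "cyc (2*k) (rho0 k t) = rho0 k t + 1" using r unfolding cyc_def by auto
    moreover have "rho0 (Suc k) t = rho0 k t + 1" using True b unfolding rho0_def by auto
    ultimately show ?thesis by simp
  next
    case False
    then have r: "rho0 k t = t" unfolding rho0_def by auto
    consider "t = Suc (2*k)" | "t = Suc (Suc (2*k))" | "t \<notin> {1..2 * Suc k}" using False by force
    then show ?thesis
    proof cases
      case 1
      have "blk t = Suc k" unfolding 1 blk_def by simp
      then show ?thesis using r 1 unfolding rho0_def cyc_def by auto
    next
      case 2
      have "blk t = Suc k" unfolding 2 blk_def by simp
      then show ?thesis using r 2 unfolding rho0_def cyc_def by auto
    next
      case 3
      then show ?thesis using r unfolding rho0_def cyc_def by auto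
    qed
  qed
qed

lemma rho0_perm: "rho0 k permutes {1..2*k} \<and> sign (rho0 k) = 1"
proof (induction k)
  case 0
  have "rho0 0 = id" unfolding rho0_def by (auto simp: id_def)
  then show ?case by (metis permutes_id sign_id)
next
  case (Suc k)
  have C: "cyc (2*k) permutes {1..2 * Suc k}" using cyc_perm[of "2*k"] by (auto intro: permutes_subset)
  have R: "rho0 k permutes {1..2 * Suc k}" using Suc.IH by (auto intro: permutes_subset)
  have "rho0 (Suc k) permutes {1..2 * Suc k}" unfolding rho0_Suc by (rule permutes_compose[OF R C])
  moreover have "sign (rho0 (Suc k)) = 1"
    unfolding rho0_Suc
    using sign_compose[OF permutation_of_permutes_nat[OF C] permutation_of_permutes_nat[OF R]] Suc.IH
      cyc_perm[of "2*k"] by simp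
  ultimately show ?case by simp
qed

definition cc :: "nat \<Rightarrow> (nat \<Rightarrow> nat) \<Rightarrow> nat set \<Rightarrow> nat \<Rightarrow> nat" where
  "cc k s E = (\<lambda>i. if i \<in> {1..k} then (if i \<in> E then k - 1 + s i else k - s i) else undefined)"

definition rc :: "nat \<Rightarrow> (nat \<Rightarrow> nat) \<Rightarrow> nat \<Rightarrow> nat" where
  "rc k c = (\<lambda>t. if t \<in> {1..2*k} then ex (2*k - 1) c t + 1 else t)"

definition Good :: "nat \<Rightarrow> (nat \<Rightarrow> nat) set" where
  "Good k = {c \<in> PiE {1..k} (\<lambda>_. {..2*k - 1}). inj_on (ex (2*k - 1) c) {1..2*k}}"

definition sE :: "nat \<Rightarrow> (nat \<Rightarrow> nat) \<Rightarrow> (nat \<Rightarrow> nat) \<times> nat set" where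
  "sE k c = ((\<lambda>i. if i \<in> {1..k} then k - min (c i) (2*k - 1 - c i) else i), {i\<in>{1..k}. k \<le> c i})"

lemma rc_cc:
  assumes s: "s permutes {1..k}" and E: "E \<subseteq> {1..k}"
  shows "rc k (cc k s E) = rho0 k \<circ> tau s E"
proof
  fix t
  show "rc k (cc k s E) t = (rho0 k \<circ> tau s E) t"
  proof (cases "t \<in> {1..2*k}")
    case False
    then have "tau s E t = t" using permutes_not_in[OF tau_permutes[OF s E]] by blast
    moreover have "rc k (cc k s E) t = t" using False unfolding rc_def by auto
    moreover have "rho0 k t = t" using False unfolding rho0_def by auto
    ultimately show ?thesis by simp
  next
    case True
    define i where "i = blk t"
    have i: "i \<in> {1..k}" using True blk_range i_def by auto
    have si: "s i \<in> {1..k}" using permutes_in_image[OF s] i by blast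
    have tt: "t = 2*i - 1 \<or> t = 2*i" using t_decomp[of t] True i_def by (auto split: if_splits)
    have o1: "2 * s i - 1 \<in> {1..2*k}" "2 * s i \<in> {1..2*k}" using si by auto
    have o2: "odd (2 * s i - 1)" using si by auto
    from tt show ?thesis
    proof
      assume t1: "t = 2*i - 1"
      have odd: "odd t" using t1 i by auto
      show ?thesis
        using i si o1 o2 unfolding t1 rc_def rho0_def ex_def cc_def by (cases "i \<in> E") auto
    next
      assume t2: "t = 2*i"
      show ?thesis
        using i si o1 o2 unfolding t2 rc_def rho0_def ex_def cc_def by (cases "i \<in> E") auto
    qed
  qed
qed


lemma ex_odd: "i \<ge> 1 \<Longrightarrow> ex N c (2*i - 1) = c i" unfolding ex_def by auto
lemma ex_even: "ex N c (2*i) = N - c i" unfolding ex_def by auto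

lemma rc_ex: "t \<in> {1..2*k} \<Longrightarrow> ex (2*k - 1) c t = rc k c t - 1" unfolding rc_def by simp

lemma cc_Good: assumes s: "s permutes {1..k}" and E: "E \<subseteq> {1..k}" shows "cc k s E \<in> Good k"
proof -
  have si: "s i \<in> {1..k}" if "i \<in> {1..k}" for i using permutes_in_image[OF s] that by blast
  have "cc k s E \<in> PiE {1..k} (\<lambda>_. {..2*k - 1})"
  proof (unfold PiE_iff, intro conjI ballI)
    fix i assume i: "i \<in> {1..k}"
    show "cc k s E i \<in> {..2*k - 1}" using si[OF i] i unfolding cc_def by auto
  next
    show "cc k s E \<in> extensional {1..k}" unfolding cc_def extensional_def by auto
  qed
  moreover have "inj_on (ex (2*k - 1) (cc k s E)) {1..2*k}"
  proof (rule inj_onI)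
    fix a b assume a: "a \<in> {1..2*k}" and b: "b \<in> {1..2*k}"
      and e: "ex (2*k - 1) (cc k s E) a = ex (2*k - 1) (cc k s E) b"
    have "rc k (cc k s E) a = rc k (cc k s E) b" using e a b unfolding rc_def by simp
    then have "rho0 k (tau s E a) = rho0 k (tau s E b)" using rc_cc[OF s E] by (metis comp_apply)
    then have "tau s E a = tau s E b"
      using permutes_inj[OF conjunct1[OF rho0_perm[of k]]] by (auto dest: injD)
    then show "a = b" using permutes_inj[OF tau_permutes[OF s E]] by (auto dest: injD)
  qed
  ultimately show ?thesis unfolding Good_def by simp
qed

definition V :: "nat \<Rightarrow> rat" where
  "V k = (\<Prod>j\<in>{1..k}. of_nat ((2*k - 1) choose (k - j)) * (-1) ^ (k - j))"

lemma prod_sign_E': assumes "E \<subseteq> {1..(k::nat)}"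
  shows "(\<Prod>i\<in>{1..k}. (if i \<in> E then 1 else -1 :: rat)) = (-1) ^ k * (-1) ^ card E"
proof -
  have "(\<Prod>i\<in>{1..k}. (if i \<in> E then 1 else -1 :: rat)) = (\<Prod>i\<in>{1..k}. (-1) * (if i \<in> E then -1 else 1 :: rat))"
    by (intro prod.cong refl) auto
  also have "\<dots> = (\<Prod>i\<in>{1..k}. (-1::rat)) * (\<Prod>i\<in>{1..k}. (if i \<in> E then -1 else 1 :: rat))"
    by (rule prod.distrib)
  also have "\<dots> = (-1) ^ k * (\<Prod>i\<in>{1..k}. (if i \<in> E then -1 else 1 :: rat))"
    by simp
  finally show ?thesis using prod_sign_E[OF assms] by simp
qed

lemma W_cc:
  assumes s: "s permutes {1..k}" and E: "E \<subseteq> {1..k}"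
  shows "W k (2*k - 1) (cc k s E) * of_int (sign (rc k (cc k s E))) = (-1) ^ k * V k"
proof -
  define v where "v = (\<lambda>j. of_nat ((2*k - 1) choose (k - j)) * (-1) ^ (k - j) :: rat)"
  have si: "s i \<in> {1..k}" if "i \<in> {1..k}" for i using permutes_in_image[OF s] that by blast
  have wi: "w (2*k - 1) (cc k s E i) = (if i \<in> E then 1 else -1) * v (s i)" if i: "i \<in> {1..k}" for i
  proof (cases "i \<in> E")
    case True
    have c: "cc k s E i = k - 1 + s i" using True i unfolding cc_def by simp
    have s1: "s i \<ge> 1" "s i \<le> k" using si[OF i] by auto
    have e1: "2*k - 1 - (k - 1 + s i) = k - s i" using s1 by simp
    have e2: "(2*k - 1) choose (k - 1 + s i) = (2*k - 1) choose (k - s i)"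
      using binomial_symmetric[of "k - 1 + s i" "2*k - 1"] s1 e1 by simp
    show ?thesis unfolding w_def c e1 e2 v_def using True by simp
  next
    case False
    have c: "cc k s E i = k - s i" using False i unfolding cc_def by simp
    have s1: "s i \<ge> 1" "s i \<le> k" using si[OF i] by auto
    have e1: "2*k - 1 - (k - s i) = (k - s i) + (2 * s i - 1)" using s1 by simp
    have o: "odd (2 * s i - 1)" using s1 by simp
    have "(-1::rat) ^ (2*k - 1 - (k - s i)) = - ((-1) ^ (k - s i))"
      unfolding e1 power_add using o by simp
    then show ?thesis unfolding w_def c v_def using False by simp
  qed
  have "W k (2*k - 1) (cc k s E) = (\<Prod>i\<in>{1..k}. (if i \<in> E then 1 else -1) * v (s i))"
    unfolding W_def by (intro prod.cong refl) (rule wi)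
  also have "\<dots> = (\<Prod>i\<in>{1..k}. (if i \<in> E then 1 else -1)) * (\<Prod>i\<in>{1..k}. v (s i))"
    by (rule prod.distrib)
  also have "(\<Prod>i\<in>{1..k}. v (s i)) = V k"
    using prod.permute[OF s, of v] unfolding V_def v_def by (simp add: comp_def)
  finally have Wc: "W k (2*k - 1) (cc k s E) = (-1) ^ k * (-1) ^ card E * V k"
    using prod_sign_E'[OF E] by simp
  have "sign (rc k (cc k s E)) = sign (rho0 k) * sign (tau s E)"
    unfolding rc_cc[OF s E]
    by (rule sign_compose[OF permutation_of_permutes_nat[OF conjunct1[OF rho0_perm]]
          permutation_of_permutes_nat[OF tau_permutes[OF s E]]])
  then have sg: "sign (rc k (cc k s E)) = (-1) ^ card E" using rho0_perm[of k] sign_tau[OF s E] by simp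
  have "(-1::rat) ^ card E * (-1) ^ card E = 1" by (simp add: power_mult_distrib[symmetric])
  then show ?thesis unfolding Wc sg by (simp add: mult_ac)
qed


lemma sE_cc:
  assumes s: "s permutes {1..k}" and E: "E \<subseteq> {1..k}"
  shows "sE k (cc k s E) = (s, E)"
proof -
  have si: "s i \<in> {1..k}" if "i \<in> {1..k}" for i using permutes_in_image[OF s] that by blast
  have 1: "(\<lambda>i. if i \<in> {1..k} then k - min (cc k s E i) (2*k - 1 - cc k s E i) else i) = s"
  proof
    fix i show "(if i \<in> {1..k} then k - min (cc k s E i) (2*k - 1 - cc k s E i) else i) = s i"
    proof (cases "i \<in> {1..k}")
      case True
      then show ?thesis using si[OF True] unfolding cc_def by (cases "i \<in> E") auto
    next
      case False
      then show ?thesis using permutes_not_in[OF s] by auto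
    qed
  qed
  have 2: "{i\<in>{1..k}. k \<le> cc k s E i} = E"
  proof (intro set_eqI iffI)
    fix i assume "i \<in> {i\<in>{1..k}. k \<le> cc k s E i}"
    then show "i \<in> E" using si[of i] unfolding cc_def by (cases "i \<in> E") auto
  next
    fix i assume "i \<in> E"
    then show "i \<in> {i\<in>{1..k}. k \<le> cc k s E i}" using E si[of i] unfolding cc_def by auto
  qed
  show ?thesis unfolding sE_def 1 2 by simp
qed

lemma Good_D:
  assumes c: "c \<in> Good k"
  shows "\<And>i. i \<in> {1..k} \<Longrightarrow> c i \<le> 2*k - 1" "\<And>i. i \<notin> {1..k} \<Longrightarrow> c i = undefined"
    "inj_on (ex (2*k - 1) c) {1..2*k}"
  using c unfolding Good_def PiE_iff extensional_def by auto

lemma cc_sE: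
  assumes c: "c \<in> Good k"
  shows "cc k (fst (sE k c)) (snd (sE k c)) = c"
proof
  fix i
  show "cc k (fst (sE k c)) (snd (sE k c)) i = c i"
  proof (cases "i \<in> {1..k}")
    case True
    have ci: "c i \<le> 2*k - 1" using Good_D(1)[OF c True] .
    show ?thesis using True ci unfolding cc_def sE_def by (cases "k \<le> c i") auto
  next
    case False
    then show ?thesis using Good_D(2)[OF c] unfolding cc_def by auto
  qed
qed

lemma sE_in:
  assumes c: "c \<in> Good k"
  shows "sE k c \<in> Hs k"
proof -
  define m where "m = (\<lambda>i. min (c i) (2*k - 1 - c i))"
  have ci: "c i \<le> 2*k - 1" if "i \<in> {1..k}" for i using Good_D(1)[OF c that] .
  have mk: "m i \<le> k - 1" if "i \<in> {1..k}" for i using ci[OF that] that unfolding m_def by auto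
  have mex: "\<exists>a. (a = 2*i - 1 \<or> a = 2*i) \<and> m i = ex (2*k - 1) c a" if "i \<in> {1..k}" for i
  proof (cases "c i \<le> 2*k - 1 - c i")
    case True then show ?thesis using that ex_odd[of i "2*k-1" c] unfolding m_def by (intro exI[of _ "2*i - 1"]) auto
  next
    case False then show ?thesis using that ex_even[of "2*k-1" c i] unfolding m_def by (intro exI[of _ "2*i"]) auto
  qed
  define s where "s = (\<lambda>i. if i \<in> {1..k} then k - m i else i)"
  have "s permutes {1..k}"
  proof (rule inj_imp_permutes)
    show "inj_on s {1..k}"
    proof (rule inj_onI)
      fix i j assume i: "i \<in> {1..k}" and j: "j \<in> {1..k}" and e: "s i = s j"
      have "m i = m j" using e mk[OF i] mk[OF j] i j unfolding s_def by auto
      obtain a where a: "a = 2*i - 1 \<or> a = 2*i" "m i = ex (2*k - 1) c a" using mex[OF i] by blast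
      obtain b where b: "b = 2*j - 1 \<or> b = 2*j" "m j = ex (2*k - 1) c b" using mex[OF j] by blast
      have ab: "a \<in> {1..2*k}" "b \<in> {1..2*k}" using a(1) b(1) i j by auto
      have "a = b" using inj_onD[OF Good_D(3)[OF c]] a b ab \<open>m i = m j\<close> by metis
      then have "blk a = blk b" by simp
      moreover have "blk a = i" using a(1) i by auto
      moreover have "blk b = j" using b(1) j by auto
      ultimately show "i = j" by simp
    qed
    show "s i \<in> {1..k}" if "i \<in> {1..k}" for i using mk[OF that] that unfolding s_def by auto
    show "s i = i" if "i \<notin> {1..k}" for i using that unfolding s_def by auto
  qed simp
  moreover have "fst (sE k c) = s" unfolding sE_def s_def m_def by simp
  moreover have "snd (sE k c) \<subseteq> {1..k}" unfolding sE_def by auto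
  ultimately show ?thesis unfolding Hs_def by (cases "sE k c") auto
qed

lemma Hs_card: "card (Hs k) \<noteq> 0"
proof -
  have "finite (Hs k)" unfolding Hs_def by (auto intro: finite_permutations)
  moreover have "(id, {}) \<in> Hs k" unfolding Hs_def by (auto intro: permutes_id)
  ultimately show ?thesis by (auto simp: card_eq_0_iff)
qed

lemma skew_odd: "odd N \<Longrightarrow> ((a::rat) - b) ^ N = - ((b - a) ^ N)"
proof -
  assume "odd N"
  have "(a - b) ^ N = (- (b - a)) ^ N" by simp
  also have "\<dots> = - ((b - a) ^ N)" using \<open>odd N\<close> by (rule power_minus_odd)
  finally show ?thesis .
qed

lemma sum_good:
  "(\<Sum>c\<in>PiE {1..k} (\<lambda>_. {..2*k - 1}). W k (2*k - 1) c * Dx (2*k) x (ex (2*k - 1) c))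
   = of_nat (card (Hs k)) * ((-1) ^ k * V k) * Dx (2*k) x (\<lambda>t. t - 1)"
proof -
  let ?C = "PiE {1..k} (\<lambda>_. {..2*k - 1})"
  let ?D0 = "Dx (2*k) x (\<lambda>t. t - 1)"
  have rcp: "rc k c permutes {1..2*k}" if c: "c \<in> Good k" for c
  proof -
    have h: "sE k c \<in> Hs k" by (rule sE_in[OF c])
    have s: "fst (sE k c) permutes {1..k}" and E: "snd (sE k c) \<subseteq> {1..k}" using h unfolding Hs_def by auto
    have "rc k c = rho0 k \<circ> tau (fst (sE k c)) (snd (sE k c))"
      using rc_cc[OF s E] cc_sE[OF c] by simp
    then show ?thesis using permutes_compose[OF tau_permutes[OF s E] conjunct1[OF rho0_perm]] by simp
  qed
  have "(\<Sum>c\<in>?C. W k (2*k - 1) c * Dx (2*k) x (ex (2*k - 1) c))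
      = (\<Sum>c\<in>Good k. W k (2*k - 1) c * of_int (sign (rc k c)) * ?D0)"
  proof (rule sum.mono_neutral_cong_right)
    show "finite ?C" by (rule finite_PiE) auto
    show "Good k \<subseteq> ?C" unfolding Good_def by auto
    show "\<forall>c\<in>?C - Good k. W k (2*k - 1) c * Dx (2*k) x (ex (2*k - 1) c) = 0"
    proof
      fix c assume "c \<in> ?C - Good k"
      then have "\<not> inj_on (ex (2*k - 1) c) {1..2*k}" unfolding Good_def by auto
      then obtain a b where "a \<in> {1..2*k}" "b \<in> {1..2*k}" "a \<noteq> b" "ex (2*k - 1) c a = ex (2*k - 1) c b"
        unfolding inj_on_def by blast
      then have "Dx (2*k) x (ex (2*k - 1) c) = 0" by (rule Dx_alt_exp)
      then show "W k (2*k - 1) c * Dx (2*k) x (ex (2*k - 1) c) = 0" by simp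
    qed
    show "W k (2*k - 1) c * Dx (2*k) x (ex (2*k - 1) c) = W k (2*k - 1) c * of_int (sign (rc k c)) * ?D0"
      if c: "c \<in> Good k" for c
      using Dx_perm_exp[OF rcp[OF c], of "ex (2*k - 1) c" x] rc_ex[of _ k c] by simp
  qed
  also have "\<dots> = (\<Sum>h\<in>Hs k. W k (2*k - 1) (cc k (fst h) (snd h)) * of_int (sign (rc k (cc k (fst h) (snd h)))) * ?D0)"
  proof (rule sum.reindex_bij_witness[where j = "sE k" and i = "\<lambda>h. cc k (fst h) (snd h)"])
    fix c assume c: "c \<in> Good k"
    show "cc k (fst (sE k c)) (snd (sE k c)) = c" by (rule cc_sE[OF c])
    then show "W k (2*k - 1) (cc k (fst (sE k c)) (snd (sE k c))) * of_int (sign (rc k (cc k (fst (sE k c)) (snd (sE k c))))) * ?D0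
        = W k (2*k - 1) c * of_int (sign (rc k c)) * ?D0" by simp
    show "sE k c \<in> Hs k" by (rule sE_in[OF c])
  next
    fix h assume h: "h \<in> Hs k"
    have s: "fst h permutes {1..k}" and E: "snd h \<subseteq> {1..k}" using h unfolding Hs_def by auto
    show "sE k (cc k (fst h) (snd h)) = h" using sE_cc[OF s E] by simp
    show "cc k (fst h) (snd h) \<in> Good k" by (rule cc_Good[OF s E])
  qed
  also have "\<dots> = (\<Sum>h\<in>Hs k. (-1) ^ k * V k * ?D0)"
  proof (rule sum.cong[OF refl])
    fix h assume h: "h \<in> Hs k"
    have s: "fst h permutes {1..k}" and E: "snd h \<subseteq> {1..k}" using h unfolding Hs_def by auto
    show "W k (2*k - 1) (cc k (fst h) (snd h)) * of_int (sign (rc k (cc k (fst h) (snd h)))) * ?D0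
        = (-1) ^ k * V k * ?D0" using W_cc[OF s E] by simp
  qed
  also have "\<dots> = of_nat (card (Hs k)) * ((-1) ^ k * V k) * ?D0" by simp
  finally show ?thesis .
qed

lemma pf_main:
  fixes x :: "nat \<Rightarrow> rat"
  assumes k: "k \<ge> 1"
  shows "pfaffian (2*k) (\<lambda>i j. (x i - x j) ^ (2*k - 1)) = (-1) ^ k * V k * Dx (2*k) x (\<lambda>t. t - 1)"
proof -
  have odd: "odd (2*k - 1)" using k by simp
  have "of_nat (card (Hs k)) * pfaffian (2*k) (\<lambda>i j. (x i - x j) ^ (2*k - 1))
      = Fs k (\<lambda>i j. (x i - x j) ^ (2*k - 1))"
    by (rule Fs_rel[symmetric]) (rule skew_odd[OF odd])
  also have "\<dots> = of_nat (card (Hs k)) * ((-1) ^ k * V k * Dx (2*k) x (\<lambda>t. t - 1))"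
    unfolding Fs_expand sum_good by (simp add: mult_ac)
  finally show ?thesis using Hs_card[of k] by simp
qed

lemma pf_zero:
  fixes x :: "nat \<Rightarrow> rat"
  assumes m: "m \<ge> 1" "2*m < 2*k"
  shows "pfaffian (2*k) (\<lambda>i j. (x i - x j) ^ (2*m - 1)) = 0"
proof -
  let ?N = "2*m - 1"
  have odd: "odd ?N" using m by simp
  have "of_nat (card (Hs k)) * pfaffian (2*k) (\<lambda>i j. (x i - x j) ^ ?N) = Fs k (\<lambda>i j. (x i - x j) ^ ?N)"
    by (rule Fs_rel[symmetric]) (rule skew_odd[OF odd])
  also have "\<dots> = (\<Sum>c\<in>PiE {1..k} (\<lambda>_. {..?N}). W k ?N c * Dx (2*k) x (ex ?N c))"
    by (rule Fs_expand)
  also have "\<dots> = 0"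
  proof (rule sum.neutral, rule ballI)
    fix c assume c: "c \<in> PiE {1..k} (\<lambda>_. {..?N})"
    have img: "ex ?N c ` {1..2*k} \<subseteq> {..?N}"
    proof
      fix y assume "y \<in> ex ?N c ` {1..2*k}"
      then obtain t where t: "t \<in> {1..2*k}" "y = ex ?N c t" by blast
      have "blk t \<in> {1..k}" using t(1) blk_range by auto
      then have "c (blk t) \<le> ?N" using c by (auto simp: PiE_iff)
      then show "y \<in> {..?N}" using t unfolding ex_def by auto
    qed
    have "\<not> inj_on (ex ?N c) {1..2*k}"
    proof
      assume "inj_on (ex ?N c) {1..2*k}"
      then have "card {1..2*k} \<le> card {..?N}" using img by (intro card_inj_on_le) auto
      then show False using m by simp
    qed
    then obtain a b where "a \<in> {1..2*k}" "b \<in> {1..2*k}" "a \<noteq> b" "ex ?N c a = ex ?N c b"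
      unfolding inj_on_def by blast
    then have "Dx (2*k) x (ex ?N c) = 0" by (rule Dx_alt_exp)
    then show "W k ?N c * Dx (2*k) x (ex ?N c) = 0" by simp
  qed
  finally show ?thesis using Hs_card[of k] by simp
qed

lemma choose2_Suc: "Suc n choose 2 = (n choose 2) + n"
  by (simp add: numeral_2_eq_2)

lemma tri_split:
  "(\<Prod>a\<in>{1..Suc n}. \<Prod>b\<in>{a<..Suc n}. g a b) = (\<Prod>a\<in>{1..n}. \<Prod>b\<in>{a<..n}. g a b) * (\<Prod>a\<in>{1..n}. g a (Suc n) :: rat)"
proof -
  have "(\<Prod>a\<in>{1..Suc n}. \<Prod>b\<in>{a<..Suc n}. g a b) = (\<Prod>a\<in>{1..n}. \<Prod>b\<in>{a<..Suc n}. g a b)"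
    by (simp add: prod.cl_ivl_Suc)
  also have "\<dots> = (\<Prod>a\<in>{1..n}. (\<Prod>b\<in>{a<..n}. g a b) * g a (Suc n))"
  proof (rule prod.cong[OF refl])
    fix a assume "a \<in> {1..n}"
    then have "{a<..Suc n} = insert (Suc n) {a<..n}" by auto
    then show "(\<Prod>b\<in>{a<..Suc n}. g a b) = (\<Prod>b\<in>{a<..n}. g a b) * g a (Suc n)"
      by (simp add: mult.commute)
  qed
  also have "\<dots> = (\<Prod>a\<in>{1..n}. \<Prod>b\<in>{a<..n}. g a b) * (\<Prod>a\<in>{1..n}. g a (Suc n))"
    by (rule prod.distrib)
  finally show ?thesis .
qed

lemma tri_neg:
  "(\<Prod>a\<in>{1..n}. \<Prod>b\<in>{a<..n}. - f a b) = (-1) ^ (n choose 2) * (\<Prod>a\<in>{1..n}. \<Prod>b\<in>{a<..n}. (f a b :: rat))"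
proof (induction n)
  case 0 then show ?case by (simp add: numeral_2_eq_2)
next
  case (Suc n)
  have "(\<Prod>a\<in>{1..n}. - f a (Suc n)) = (-1) ^ n * (\<Prod>a\<in>{1..n}. f a (Suc n))"
  proof -
    have "(\<Prod>a\<in>{1..n}. - f a (Suc n)) = (\<Prod>a\<in>{1..n}. (-1) * f a (Suc n))" by simp
    also have "\<dots> = (\<Prod>a\<in>{1..n}. (-1::rat)) * (\<Prod>a\<in>{1..n}. f a (Suc n))" by (rule prod.distrib)
    finally show ?thesis by simp
  qed
  then show ?case unfolding tri_split Suc.IH choose2_Suc by (simp add: power_add mult_ac)
qed

lemma sign_prod: "(\<Prod>j\<in>{0..<k}. (-1::rat) ^ j) = (-1) ^ (k choose 2)"
proof (induction k)
  case 0 then show ?case by (simp add: numeral_2_eq_2)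
next
  case (Suc k) then show ?case by (simp add: choose2_Suc power_add)
qed

lemma V_eq: "V k = (-1) ^ (k choose 2) * (\<Prod>j\<in>{0..<k}. of_nat ((2*k - 1) choose j))"
proof -
  define f where "f = (\<lambda>j. of_nat ((2*k - 1) choose j) * (-1) ^ j :: rat)"
  have "V k = (\<Prod>j\<in>{1..k}. f (k - j))" unfolding V_def f_def by simp
  also have "\<dots> = (\<Prod>j\<in>{0..<k}. f j)"
    by (rule prod.reindex_bij_witness[where i = "\<lambda>j. k - j" and j = "\<lambda>j. k - j"]) auto
  also have "\<dots> = (\<Prod>j\<in>{0..<k}. of_nat ((2*k - 1) choose j)) * (\<Prod>j\<in>{0..<k}. (-1::rat) ^ j)"
    unfolding f_def by (rule prod.distrib)
  finally show ?thesis using sign_prod[of k] by simp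
qed

lemma vdm_sign: "Dx n x (\<lambda>t. t - 1) = (-1) ^ (n choose 2) * (\<Prod>i\<in>{1..n}. \<Prod>j\<in>{i<..n}. (x i - x j))"
proof -
  have e: "(\<Prod>a\<in>{1..n}. \<Prod>b\<in>{a<..n}. - (x a - x b))
     = (-1) ^ (n choose 2) * (\<Prod>a\<in>{1..n}. \<Prod>b\<in>{a<..n}. (x a - x b))" by (rule tri_neg)
  have e2: "(\<Prod>a\<in>{1..n}. \<Prod>b\<in>{a<..n}. (x b - x a)) = (\<Prod>a\<in>{1..n}. \<Prod>b\<in>{a<..n}. - (x a - x b))"
    by simp
  show ?thesis unfolding vandermonde e2 e ..
qed

theorem mainTheorem12:
  fixes n :: nat
  assumes "even n" and "n \<ge> 2"
  shows "(\<forall>x :: nat \<Rightarrow> rat.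
            pfaffian n (\<lambda>i j. (x i - x j) ^ (n - 1))
            = (-1) ^ ((n div 2) choose 2)
              * (\<Prod>k\<in>{0..<n div 2}. of_nat ((n - 1) choose k))
              * (\<Prod>i\<in>{1..n}. \<Prod>j\<in>{i<..n}. (x i - x j)))
         \<and> (\<forall>(m::nat) (x :: nat \<Rightarrow> rat). 1 \<le> m \<and> 2 * m < n \<longrightarrow>
              pfaffian n (\<lambda>i j. (x i - x j) ^ (2 * m - 1)) = 0)"
proof (intro conjI allI impI)
  define k where "k = n div 2"
  have n: "n = 2*k" using assms(1) k_def by simp
  have k1: "k \<ge> 1" using assms(2) n by simp
  {
    fix x :: "nat \<Rightarrow> rat"
    have c2: "(2*k) choose 2 = k * (2*k - 1)" by (simp add: choose_two)
    have "(-1::rat) ^ ((2*k) choose 2) = (-1) ^ k"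
      unfolding c2 using k1 by (simp add: minus_one_power_iff)
    then have "(-1::rat) ^ k * (-1) ^ ((2*k) choose 2) = 1"
      by (simp add: power_mult_distrib[symmetric])
    then show "pfaffian n (\<lambda>i j. (x i - x j) ^ (n - 1))
            = (-1) ^ ((n div 2) choose 2)
              * (\<Prod>k\<in>{0..<n div 2}. of_nat ((n - 1) choose k))
              * (\<Prod>i\<in>{1..n}. \<Prod>j\<in>{i<..n}. (x i - x j))"
      unfolding n pf_main[OF k1] V_eq vdm_sign by (simp add: mult_ac)
  }
  {
    fix m :: nat and x :: "nat \<Rightarrow> rat"
    assume m: "1 \<le> m \<and> 2 * m < n"
    show "pfaffian n (\<lambda>i j. (x i - x j) ^ (2 * m - 1)) = 0"
      unfolding n by (rule pf_zero) (use m n in auto)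
  }
qed

end
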